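(* The intersection of an $\ell_1$-convex set and an interval in $\mathbb{R}^n$ is $\ell_1$-convex.
   Context: A subset $Z\subseteq\mathbb{R}^n$ is $\ell_1$-convex if for all $z,z'\in Z$, with $D=\sum_i|z_i-z'_i|$, there is $\gamma\colon[0,D]\to Z$ with $\gamma(0)=z,\gamma(D)=z'$ and $\sum_i|\gamma_i(t)-\gamma_i(t')|=|t-t'|$ for all $t,t'$. An interval in $\mathbb{R}^n$ is a set $\prod_{i=1}^n I_i$ with each $I_i\subseteq\mathbb{R}$ a (possibly empty, possibly unbounded) interval. *)

theory Defs
  imports "HOL-Analysis.Analysis"
begin

definition l1_dist :: "real ^ 'n \<Rightarrow> real ^ 'n \<Rightarrow> real" where
  "l1_dist z z' = (\<Sum>i\<in>UNIV. \<bar>z $ i - z' $ i\<bar>)"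

definition l1_convex :: "(real ^ 'n) set \<Rightarrow> bool" where
  "l1_convex Z \<longleftrightarrow>
     (\<forall>z\<in>Z. \<forall>z'\<in>Z. \<exists>\<gamma> :: real \<Rightarrow> real ^ 'n.
        \<gamma> 0 = z \<and> \<gamma> (l1_dist z z') = z' \<and>
        \<gamma> ` {0..l1_dist z z'} \<subseteq> Z \<and>
        (\<forall>t\<in>{0..l1_dist z z'}. \<forall>t'\<in>{0..l1_dist z z'}.
            l1_dist (\<gamma> t) (\<gamma> t') = \<bar>t - t'\<bar>))"

definition box_interval :: "(real ^ 'n) set \<Rightarrow> bool" where
  "box_interval B \<longleftrightarrow>
     (\<exists>I :: 'n \<Rightarrow> real set. (\<forall>i. is_interval (I i)) \<and>
        B = {x. \<forall>i. x $ i \<in> I i})"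

end

theory Submission
  imports Defs
begin

lemma sum_eq_le_pointwise:
  fixes f g :: "'a \<Rightarrow> real"
  assumes "finite A" "\<And>i. i \<in> A \<Longrightarrow> f i \<le> g i" "sum g A \<le> sum f A" "j \<in> A"
  shows "f j = g j"
proof -
  have "sum (\<lambda>i. g i - f i) A = 0"
    using assms sum_mono[of A f g] by (simp add: sum_subtractf)
  then have "\<forall>i\<in>A. g i - f i = 0"
    using sum_nonneg_eq_0_iff[of A "\<lambda>i. g i - f i"] assms by auto
  then show ?thesis using assms(4) by auto
qed

lemma between_in_interval:
  fixes a b c :: real
  assumes "is_interval S" "a \<in> S" "c \<in> S" "\<bar>a - b\<bar> + \<bar>b - c\<bar> = \<bar>a - c\<bar>"
  shows "b \<in> S"
proof -
  have "(a \<le> b \<and> b \<le> c) \<or> (c \<le> b \<and> b \<le> a)" using assms(4) by argo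
  then show ?thesis using assms(1-3) unfolding is_interval_1 by blast
qed

theorem corollary1p9:
  fixes Z B :: "(real ^ 'n) set"
  assumes "l1_convex Z" and "box_interval B"
  shows "l1_convex (Z \<inter> B)"
proof -
  obtain I where I: "\<And>i. is_interval (I i)" and B: "B = {x. \<forall>i. x $ i \<in> I i}"
    using assms(2) unfolding box_interval_def by blast
  show ?thesis unfolding l1_convex_def
  proof (intro ballI)
    fix z z' assume zZ: "z \<in> Z \<inter> B" and z'Z: "z' \<in> Z \<inter> B"
    define D where "D = l1_dist z z'"
    obtain \<gamma> where g0: "\<gamma> 0 = z" and gD: "\<gamma> D = z'" and gZ: "\<gamma> ` {0..D} \<subseteq> Z"
      and gd: "\<forall>t\<in>{0..D}. \<forall>t'\<in>{0..D}. l1_dist (\<gamma> t) (\<gamma> t') = \<bar>t - t'\<bar>"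
      using assms(1) zZ z'Z unfolding l1_convex_def D_def by blast
    have D0: "D \<ge> 0" unfolding D_def l1_dist_def by (simp add: sum_nonneg)
    have gB: "\<gamma> t \<in> B" if t: "t \<in> {0..D}" for t
    proof -
      have 1: "l1_dist z (\<gamma> t) = t" using gd t D0 g0 by (metis atLeastAtMost_iff order_refl abs_minus_commute abs_of_nonneg diff_0_right)
      have 2: "l1_dist (\<gamma> t) z' = D - t" using gd t D0 gD
        by (metis atLeastAtMost_iff order_refl abs_of_nonneg diff_ge_0_iff_ge abs_minus_commute)
      have sumeq: "(\<Sum>i\<in>UNIV. \<bar>z $ i - \<gamma> t $ i\<bar> + \<bar>\<gamma> t $ i - z' $ i\<bar>) \<le> (\<Sum>i\<in>UNIV. \<bar>z $ i - z' $ i\<bar>)"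
        using 1 2 unfolding l1_dist_def D_def[symmetric] by (simp add: sum.distrib D_def l1_dist_def)
      have "\<forall>i. \<gamma> t $ i \<in> I i"
      proof
        fix i
        have "\<bar>z $ i - z' $ i\<bar> = \<bar>z $ i - \<gamma> t $ i\<bar> + \<bar>\<gamma> t $ i - z' $ i\<bar>"
          by (rule sum_eq_le_pointwise[OF _ _ sumeq]) auto
        moreover have "z $ i \<in> I i" "z' $ i \<in> I i" using zZ z'Z B by auto
        ultimately show "\<gamma> t $ i \<in> I i"
          using between_in_interval[OF I, of "z $ i" i "z' $ i" "\<gamma> t $ i"] by simp
      qed
      then show ?thesis using B by auto
    qed
    show "\<exists>\<gamma>. \<gamma> 0 = z \<and> \<gamma> (l1_dist z z') = z' \<and> \<gamma> ` {0..l1_dist z z'} \<subseteq> Z \<inter> B \<and>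
        (\<forall>t\<in>{0..l1_dist z z'}. \<forall>t'\<in>{0..l1_dist z z'}. l1_dist (\<gamma> t) (\<gamma> t') = \<bar>t - t'\<bar>)"
      using g0 gD gZ gd gB unfolding D_def[symmetric] by blast
  qed
qed

end
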